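(* Let $n\ge2$ and let $Z$ be the $n\times n$ Zielke matrix defined by $Z[i,j]=1$ if $1\le i\le n-1$ and $j>i$, $Z[n,1]=-1$, and all other entries $0$. Fix a blocking of $Z$ into $n_t$ diagonal blocks, each of size at least $2$, and let $0<\tau\le\tfrac12$. Apply the BEAM factorization with threshold $\tau$ to $Z$. Then the max-norm growth factor equals $$\max_{1\le k\le n_t}\frac{\|\widetilde A^{(k)}\|_{\max}}{\|Z\|_{\max}}=\tau^{1-n_t}.$$
   Context: BEAM factorization with threshold $\tau$ (block LU with additive modifications): set $\widetilde A^{(1)}=Z$. For $k=1,\dots,n_t$: compute an SVD $\widetilde A^{(k)}_{k,k}=U_k\Sigma_kV_k^T$; replace every singular value $\le\tau$ in $\Sigma_k$ by $\tau$, obtaining $\widetilde\Sigma_k$, and set $D_k=U_k\widetilde\Sigma_kV_k^T$ (the modified diagonal block, with factors $L_{kk}=U_k$, $R_{kk}=\widetilde\Sigma_kV_k^T$); then form $\widetilde A^{(k+1)}=\widetilde A^{(k)}_{k+1:n_t,k+1:n_t}-\widetilde A^{(k)}_{k+1:n_t,k}D_k^{-1}\widetilde A^{(k)}_{k,k+1:n_t}$. Blocks are defined by a strictly increasing list $[1=\mathcal{I}_1<\dots<\mathcal{I}_{n_t+1}=n+1]$ and the blocks of $\widetilde A^{(k)}$ are indexed $k,\dots,n_t$. $\|X\|_{\max}=\max_{i,j}|X[i,j]|$. *)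

theory Defs
  imports Complex_Main
begin

text \<open>Matrices are represented as functions nat \<Rightarrow> nat \<Rightarrow> real, indexed 1-based
  by the global row/column indices of Z; only entries in the relevant index set matter.\<close>

definition zielke :: "nat \<Rightarrow> nat \<Rightarrow> nat \<Rightarrow> real" where
  "zielke n i j =
     (if 1 \<le> i \<and> i \<le> n - 1 \<and> i < j \<and> j \<le> n then 1
      else if i = n \<and> j = 1 then -1 else 0)"

definition maxnorm_on :: "nat set \<Rightarrow> (nat \<Rightarrow> nat \<Rightarrow> real) \<Rightarrow> real" where
  "maxnorm_on S M = Max {\<bar>M i j\<bar> | i j. i \<in> S \<and> j \<in> S}"

definition mmul_on :: "nat set \<Rightarrow> (nat \<Rightarrow> nat \<Rightarrow> real) \<Rightarrow> (nat \<Rightarrow> nat \<Rightarrow> real) \<Rightarrow> nat \<Rightarrow> nat \<Rightarrow> real" where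
  "mmul_on S A B i j = (\<Sum>l\<in>S. A i l * B l j)"

definition is_inverse_on :: "nat set \<Rightarrow> (nat \<Rightarrow> nat \<Rightarrow> real) \<Rightarrow> (nat \<Rightarrow> nat \<Rightarrow> real) \<Rightarrow> bool" where
  "is_inverse_on S M N \<longleftrightarrow>
     (\<forall>i\<in>S. \<forall>j\<in>S. mmul_on S M N i j = (if i = j then 1 else 0)
                  \<and> mmul_on S N M i j = (if i = j then 1 else 0))"

definition inv_on :: "nat set \<Rightarrow> (nat \<Rightarrow> nat \<Rightarrow> real) \<Rightarrow> nat \<Rightarrow> nat \<Rightarrow> real" where
  "inv_on S M = (SOME N. is_inverse_on S M N)"

definition orthogonal_on :: "nat set \<Rightarrow> (nat \<Rightarrow> nat \<Rightarrow> real) \<Rightarrow> bool" where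
  "orthogonal_on S Q \<longleftrightarrow>
     (\<forall>i\<in>S. \<forall>j\<in>S. (\<Sum>l\<in>S. Q l i * Q l j) = (if i = j then 1 else 0))"

definition svd_on :: "nat set \<Rightarrow> (nat \<Rightarrow> nat \<Rightarrow> real) \<Rightarrow> (nat \<Rightarrow> nat \<Rightarrow> real)
     \<Rightarrow> (nat \<Rightarrow> nat \<Rightarrow> real) \<Rightarrow> (nat \<Rightarrow> nat \<Rightarrow> real) \<Rightarrow> bool" where
  "svd_on S M U Sg V \<longleftrightarrow>
     orthogonal_on S U \<and> orthogonal_on S V \<and>
     (\<forall>i\<in>S. \<forall>j\<in>S. i \<noteq> j \<longrightarrow> Sg i j = 0) \<and>
     (\<forall>i\<in>S. Sg i i \<ge> 0) \<and>
     (\<forall>i\<in>S. \<forall>j\<in>S. M i j = (\<Sum>p\<in>S. \<Sum>q\<in>S. U i p * Sg p q * V j q))"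

definition sigma_mod :: "real \<Rightarrow> (nat \<Rightarrow> nat \<Rightarrow> real) \<Rightarrow> nat \<Rightarrow> nat \<Rightarrow> real" where
  "sigma_mod tau Sg p q = (if p = q then (if Sg p p \<le> tau then tau else Sg p p) else Sg p q)"

definition beam_D :: "nat set \<Rightarrow> real \<Rightarrow> (nat \<Rightarrow> nat \<Rightarrow> real) \<Rightarrow> (nat \<Rightarrow> nat \<Rightarrow> real)
     \<Rightarrow> (nat \<Rightarrow> nat \<Rightarrow> real) \<Rightarrow> nat \<Rightarrow> nat \<Rightarrow> real" where
  "beam_D S tau U Sg V i j = (\<Sum>p\<in>S. \<Sum>q\<in>S. U i p * sigma_mod tau Sg p q * V j q)"

text \<open>Block list I = [I_1, ..., I_(nt+1)] (I_k = I ! (k-1)), nt = length I - 1.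
  Block k has index set {I_k ..< I_(k+1)}; A k is the matrix tilde A^(k), indexed
  globally on {I_k .. n}; (U k, Sg k, V k) is the SVD chosen at step k.
  beam_run states that (A, U, Sg, V) is a valid run of BEAM on Z (any choice of SVDs).\<close>
definition blk :: "nat list \<Rightarrow> nat \<Rightarrow> nat set" where
  "blk I k = {I ! (k - 1) ..< I ! k}"

definition beam_run :: "nat \<Rightarrow> nat list \<Rightarrow> real \<Rightarrow> (nat \<Rightarrow> nat \<Rightarrow> nat \<Rightarrow> real)
     \<Rightarrow> (nat \<Rightarrow> nat \<Rightarrow> nat \<Rightarrow> real) \<Rightarrow> (nat \<Rightarrow> nat \<Rightarrow> nat \<Rightarrow> real)
     \<Rightarrow> (nat \<Rightarrow> nat \<Rightarrow> nat \<Rightarrow> real) \<Rightarrow> bool" where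
  "beam_run n I tau A U Sg V \<longleftrightarrow>
     (\<forall>i\<in>{1..n}. \<forall>j\<in>{1..n}. A 1 i j = zielke n i j) \<and>
     (\<forall>k\<in>{1..length I - 1}. svd_on (blk I k) (A k) (U k) (Sg k) (V k)) \<and>
     (\<forall>k\<in>{1..<length I - 1}. \<forall>i\<in>{I ! k..n}. \<forall>j\<in>{I ! k..n}.
        A (Suc k) i j = A k i j -
          (\<Sum>p\<in>blk I k. \<Sum>q\<in>blk I k.
             A k i p * inv_on (blk I k) (beam_D (blk I k) tau (U k) (Sg k) (V k)) p q * A k q j))"

end

theory Submission imports Defs "Jordan_Normal_Form.Determinant" begin

lemma orth_rows:
  fixes Q :: "nat \<Rightarrow> nat \<Rightarrow> real"
  assumes "orthogonal_on {a..<b} Q" "i \<in> {a..<b}" "j \<in> {a..<b}"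
  shows "(\<Sum>l\<in>{a..<b}. Q i l * Q j l) = (if i = j then 1 else 0)"
proof -
  define m where "m = b - a"
  define QM where "QM = mat m m (\<lambda>(i,j). Q (a+i) (a+j))"
  have sh: "\<And>f::nat\<Rightarrow>real. (\<Sum>l\<in>{a..<b}. f l) = (\<Sum>l\<in>{0..<m}. f (a+l))"
  proof -
    fix f :: "nat \<Rightarrow> real"
    have "(\<Sum>l\<in>{0..<m}. f (a+l)) = (\<Sum>l\<in>{0+a..<m+a}. f l)"
      by (subst sum.shift_bounds_nat_ivl) (simp add: add.commute)
    also have "{0+a..<m+a} = {a..<b}" using assms(2) by (auto simp: m_def)
    finally show "(\<Sum>l\<in>{a..<b}. f l) = (\<Sum>l\<in>{0..<m}. f (a+l))" by simp
  qed
  have "transpose_mat QM * QM = 1\<^sub>m m"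
  proof (rule eq_matI)
    fix i j assume ij: "i < dim_row (1\<^sub>m m)" "j < dim_col (1\<^sub>m m)"
    have "(transpose_mat QM * QM) $$ (i,j) = (\<Sum>l\<in>{0..<m}. Q (a+l) (a+i) * Q (a+l) (a+j))"
      using ij by (simp add: QM_def scalar_prod_def)
    also have "\<dots> = (\<Sum>l\<in>{a..<b}. Q l (a+i) * Q l (a+j))" by (simp add: sh)
    also have "\<dots> = (if a+i = a+j then 1 else 0)"
      using assms(1) ij unfolding orthogonal_on_def by (auto simp: m_def)
    finally show "(transpose_mat QM * QM) $$ (i,j) = 1\<^sub>m m $$ (i,j)" using ij by simp
  next
    show "dim_row (transpose_mat QM * QM) = dim_row (1\<^sub>m m)" by (simp add: QM_def)
  next
    show "dim_col (transpose_mat QM * QM) = dim_col (1\<^sub>m m)" by (simp add: QM_def)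
  qed
  hence QQ: "QM * transpose_mat QM = 1\<^sub>m m"
    by (rule mat_mult_left_right_inverse[rotated 2]) (simp_all add: QM_def)
  define i' where "i' = i - a"
  define j' where "j' = j - a"
  have ij': "i' < m" "j' < m" "i = a + i'" "j = a + j'" using assms(2,3) by (auto simp: i'_def j'_def m_def)
  have "(QM * transpose_mat QM) $$ (i',j') = (\<Sum>l\<in>{0..<m}. Q i (a+l) * Q j (a+l))"
    using ij' by (simp add: QM_def scalar_prod_def)
  also have "\<dots> = (\<Sum>l\<in>{a..<b}. Q i l * Q j l)" by (simp add: sh)
  finally show ?thesis using QQ ij' by simp
qed

lemma sum_single:
  assumes "finite S" "p \<in> S" "\<And>q. q \<in> S \<Longrightarrow> q \<noteq> p \<Longrightarrow> g q = 0"
  shows "sum g S = g p"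
proof -
  have "sum g S = g p + sum g (S - {p})" using assms(1,2) by (simp add: sum.remove)
  also have "sum g (S - {p}) = 0" using assms(3) by (intro sum.neutral) auto
  finally show ?thesis by simp
qed

lemma svd_single:
  assumes "svd_on S M U Sg V" "finite S" "i \<in> S" "j \<in> S"
  shows "M i j = (\<Sum>p\<in>S. U i p * Sg p p * V j p)"
proof -
  have "M i j = (\<Sum>p\<in>S. \<Sum>q\<in>S. U i p * Sg p q * V j q)" using assms unfolding svd_on_def by blast
  also have "\<dots> = (\<Sum>p\<in>S. U i p * Sg p p * V j p)"
  proof (rule sum.cong[OF refl])
    fix p assume p: "p \<in> S"
    show "(\<Sum>q\<in>S. U i p * Sg p q * V j q) = U i p * Sg p p * V j p"
      using assms(1) p by (intro sum_single[OF assms(2) p]) (auto simp: svd_on_def)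
  qed
  finally show ?thesis .
qed

lemma svd_rel1:
  assumes "svd_on S M U Sg V" "finite S" "i \<in> S" "p \<in> S"
  shows "(\<Sum>j\<in>S. M i j * V j p) = U i p * Sg p p"
proof -
  have "(\<Sum>j\<in>S. M i j * V j p) = (\<Sum>j\<in>S. \<Sum>r\<in>S. U i r * Sg r r * (V j r * V j p))"
    using svd_single[OF assms(1,2,3)] by (simp add: sum_distrib_right mult.assoc)
  also have "\<dots> = (\<Sum>r\<in>S. U i r * Sg r r * (\<Sum>j\<in>S. V j r * V j p))"
    by (subst sum.swap) (simp add: sum_distrib_left)
  also have "\<dots> = (\<Sum>r\<in>S. U i r * Sg r r * (if r = p then 1 else 0))"
    using assms(1,4) unfolding svd_on_def orthogonal_on_def by (intro sum.cong) auto
  also have "\<dots> = U i p * Sg p p" using assms(2,4) by (simp add: if_distrib sum.delta cong: if_cong)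
  finally show ?thesis .
qed

lemma svd_rel2:
  assumes "svd_on S M U Sg V" "finite S" "j \<in> S" "p \<in> S"
  shows "(\<Sum>i\<in>S. M i j * U i p) = V j p * Sg p p"
proof -
  have "(\<Sum>i\<in>S. M i j * U i p) = (\<Sum>i\<in>S. \<Sum>r\<in>S. V j r * Sg r r * (U i r * U i p))"
    by (rule sum.cong[OF refl]) (simp add: svd_single[OF assms(1,2) _ assms(3)] sum_distrib_right sum_distrib_left mult_ac)
  also have "\<dots> = (\<Sum>r\<in>S. V j r * Sg r r * (\<Sum>i\<in>S. U i r * U i p))"
    by (subst sum.swap) (simp add: sum_distrib_left)
  also have "\<dots> = (\<Sum>r\<in>S. V j r * Sg r r * (if r = p then 1 else 0))"
    using assms(1,4) unfolding svd_on_def orthogonal_on_def by (intro sum.cong) auto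
  also have "\<dots> = V j p * Sg p p" using assms(2,4) by (simp add: if_distrib sum.delta cong: if_cong)
  finally show ?thesis .
qed

lemma sumv_step:
  fixes v :: "nat \<Rightarrow> real"
  assumes "Suc j < b"
  shows "sum v {Suc j..<b} = v (Suc j) + sum v {Suc (Suc j)..<b}"
  using assms by (simp add: sum.atLeast_Suc_lessThan)

lemma sv_zero:
  fixes u v :: "nat \<Rightarrow> real"
  assumes ab: "a + 2 \<le> b"
  and nv: "\<forall>i\<in>{a..<b}. sum v {Suc i..<b} = \<sigma> * u i"
  and nu: "\<forall>j\<in>{a..<b}. sum u {a..<j} = \<sigma> * v j"
  and v1: "(\<Sum>j\<in>{a..<b}. (v j)^2) = 1" and u1: "(\<Sum>j\<in>{a..<b}. (u j)^2) = 1"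
  and s0: "0 \<le> \<sigma>" and s1: "\<sigma> < 1/2"
  shows "\<sigma> = 0"
proof (rule ccontr)
  assume "\<sigma> \<noteq> 0"
  hence sp: "\<sigma> > 0" using s0 by simp
  have va: "v a = 0" using nu[rule_format, of a] ab sp by simp
  have vj: "v j = \<sigma> * (u (j - 1) - u j)" if j: "j \<in> {Suc a..<b}" for j
  proof -
    obtain i where i: "j = Suc i" using j by (cases j) auto
    have "sum v {Suc i..<b} = v j + sum v {Suc j..<b}" using i j sumv_step[of i b v] by simp
    moreover have "sum v {Suc i..<b} = \<sigma> * u i" using nv i j by auto
    moreover have "sum v {Suc j..<b} = \<sigma> * u j" using nv j by auto
    ultimately show ?thesis using i by (simp add: algebra_simps)
  qed
  have split: "{a..<b} = insert a {Suc a..<b}" using ab by auto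
  have "(\<Sum>j\<in>{a..<b}. (v j)^2) = (\<Sum>j\<in>{Suc a..<b}. (v j)^2)"
    using va by (simp add: split)
  also have "\<dots> = (\<Sum>j\<in>{Suc a..<b}. \<sigma>^2 * (u (j - 1) - u j)^2)"
    using vj by (intro sum.cong) (auto simp: power_mult_distrib)
  also have "\<dots> \<le> (\<Sum>j\<in>{Suc a..<b}. \<sigma>^2 * (2 * (u (j - 1))^2 + 2 * (u j)^2))"
  proof (rule sum_mono)
    fix j
    have "(u (j - 1) - u j)^2 \<le> 2 * (u (j - 1))^2 + 2 * (u j)^2"
      using sum_squares_ge_zero[of "u (j-1) + u j" 0] by (simp add: power2_eq_square algebra_simps)
    thus "\<sigma>^2 * (u (j - 1) - u j)^2 \<le> \<sigma>^2 * (2 * (u (j - 1))^2 + 2 * (u j)^2)"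
      by (simp add: mult_left_mono)
  qed
  also have "\<dots> = 2 * \<sigma>^2 * ((\<Sum>j\<in>{Suc a..<b}. (u (j - 1))^2) + (\<Sum>j\<in>{Suc a..<b}. (u j)^2))"
    by (simp add: sum_distrib_left sum.distrib algebra_simps)
  finally have A: "1 \<le> 2 * \<sigma>^2 * ((\<Sum>j\<in>{Suc a..<b}. (u (j - 1))^2) + (\<Sum>j\<in>{Suc a..<b}. (u j)^2))"
    using v1 by simp
  have B1: "(\<Sum>j\<in>{Suc a..<b}. (u (j - 1))^2) \<le> 1"
  proof -
    obtain c where c: "b = Suc c" using ab by (cases b) auto
    have "(\<Sum>j\<in>{Suc a..<b}. (u (j - 1))^2) = (\<Sum>j\<in>{a..<c}. (u j)^2)"
      unfolding c sum.shift_bounds_Suc_ivl by simp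
    also have "\<dots> \<le> (\<Sum>j\<in>{a..<b}. (u j)^2)" by (rule sum_mono2) (auto simp: c)
    finally show ?thesis using u1 by simp
  qed
  have B2: "(\<Sum>j\<in>{Suc a..<b}. (u j)^2) \<le> 1"
  proof -
    have "(\<Sum>j\<in>{Suc a..<b}. (u j)^2) \<le> (\<Sum>j\<in>{a..<b}. (u j)^2)" by (rule sum_mono2) auto
    thus ?thesis using u1 by simp
  qed
  have C: "2 * \<sigma>^2 * ((\<Sum>j\<in>{Suc a..<b}. (u (j - 1))^2) + (\<Sum>j\<in>{Suc a..<b}. (u j)^2)) \<le> 2 * \<sigma>^2 * 2"
    using B1 B2 by (intro mult_left_mono) auto
  have D: "\<sigma>^2 < 1/4"
  proof -
    have "\<sigma> * \<sigma> < (1/2) * (1/2)" using s0 s1 by (intro mult_strict_mono) auto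
    thus ?thesis by (simp add: power2_eq_square)
  qed
  from A C D show False by linarith
qed

lemma sv_kernel_v:
  fixes v :: "nat \<Rightarrow> real"
  assumes nv: "\<forall>i\<in>{a..<b}. sum v {Suc i..<b} = 0" and j: "j \<in> {Suc a..<b}"
  shows "v j = 0"
proof -
  obtain i where i: "j = Suc i" using j by (cases j) auto
  have "sum v {Suc i..<b} = v j + sum v {Suc j..<b}" using i j sumv_step[of i b v] by simp
  thus ?thesis using nv i j by auto
qed

lemma sv_kernel_u:
  fixes u :: "nat \<Rightarrow> real"
  assumes nu: "\<forall>j\<in>{a..<b}. sum u {a..<j} = 0" and i: "i \<in> {a..<b}" "Suc i < b"
  shows "u i = 0"
proof -
  have e: "sum u {a..<Suc i} = sum u {a..<i} + u i" using i by simp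
  have "sum u {a..<Suc i} = 0" using nu[rule_format, of "Suc i"] i by simp
  moreover have "sum u {a..<i} = 0" using nu[rule_format, of i] i by simp
  ultimately show ?thesis using e by simp
qed

lemma inv_from_orth:
  fixes U V :: "nat \<Rightarrow> nat \<Rightarrow> real"
  assumes fin: "finite S"
  and U1: "\<forall>i\<in>S. \<forall>j\<in>S. (\<Sum>l\<in>S. U i l * U j l) = (if i = j then 1 else 0)"
  and V1: "\<forall>i\<in>S. \<forall>j\<in>S. (\<Sum>l\<in>S. V i l * V j l) = (if i = j then 1 else 0)"
  and U2: "\<forall>i\<in>S. \<forall>j\<in>S. (\<Sum>l\<in>S. U l i * U l j) = (if i = j then 1 else 0)"
  and V2: "\<forall>i\<in>S. \<forall>j\<in>S. (\<Sum>l\<in>S. V l i * V l j) = (if i = j then 1 else 0)"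
  and d: "\<forall>r\<in>S. d r \<noteq> 0"
  shows "is_inverse_on S (\<lambda>i j. \<Sum>r\<in>S. U i r * d r * V j r) (\<lambda>i j. \<Sum>r\<in>S. V i r / d r * U j r)"
  unfolding is_inverse_on_def
proof (intro ballI conjI)
  fix i j assume ij: "i \<in> S" "j \<in> S"
  have "mmul_on S (\<lambda>i j. \<Sum>r\<in>S. U i r * d r * V j r) (\<lambda>i j. \<Sum>r\<in>S. V i r / d r * U j r) i j
     = (\<Sum>q\<in>S. \<Sum>r\<in>S. \<Sum>r'\<in>S. (U i r * d r / d r' * U j r') * (V q r * V q r'))"
    unfolding mmul_on_def sum_product by (simp add: mult_ac)
  also have "\<dots> = (\<Sum>r\<in>S. \<Sum>q\<in>S. \<Sum>r'\<in>S. (U i r * d r / d r' * U j r') * (V q r * V q r'))"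
    by (rule sum.swap)
  also have "\<dots> = (\<Sum>r\<in>S. \<Sum>r'\<in>S. \<Sum>q\<in>S. (U i r * d r / d r' * U j r') * (V q r * V q r'))"
    by (rule sum.cong[OF refl], rule sum.swap)
  also have "\<dots> = (\<Sum>r\<in>S. \<Sum>r'\<in>S. (U i r * d r / d r' * U j r') * (\<Sum>q\<in>S. V q r * V q r'))"
    by (simp add: sum_distrib_left)
  also have "\<dots> = (\<Sum>r\<in>S. \<Sum>r'\<in>S. (U i r * d r / d r' * U j r') * (if r = r' then 1 else 0))"
    using V2 by (intro sum.cong refl) auto
  also have "\<dots> = (\<Sum>r\<in>S. U i r * U j r)"
    using fin d by (intro sum.cong refl) (simp add: if_distrib sum.delta cong: if_cong)
  also have "\<dots> = (if i = j then 1 else 0)" using U1 ij by auto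
  finally show "mmul_on S (\<lambda>i j. \<Sum>r\<in>S. U i r * d r * V j r) (\<lambda>i j. \<Sum>r\<in>S. V i r / d r * U j r) i j = (if i = j then 1 else 0)" .
next
  fix i j assume ij: "i \<in> S" "j \<in> S"
  have "mmul_on S (\<lambda>i j. \<Sum>r\<in>S. V i r / d r * U j r) (\<lambda>i j. \<Sum>r\<in>S. U i r * d r * V j r) i j
     = (\<Sum>q\<in>S. \<Sum>r\<in>S. \<Sum>r'\<in>S. (V i r / d r * d r' * V j r') * (U q r * U q r'))"
    unfolding mmul_on_def sum_product by (simp add: mult_ac)
  also have "\<dots> = (\<Sum>r\<in>S. \<Sum>q\<in>S. \<Sum>r'\<in>S. (V i r / d r * d r' * V j r') * (U q r * U q r'))"
    by (rule sum.swap)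
  also have "\<dots> = (\<Sum>r\<in>S. \<Sum>r'\<in>S. \<Sum>q\<in>S. (V i r / d r * d r' * V j r') * (U q r * U q r'))"
    by (rule sum.cong[OF refl], rule sum.swap)
  also have "\<dots> = (\<Sum>r\<in>S. \<Sum>r'\<in>S. (V i r / d r * d r' * V j r') * (\<Sum>q\<in>S. U q r * U q r'))"
    by (simp add: sum_distrib_left)
  also have "\<dots> = (\<Sum>r\<in>S. \<Sum>r'\<in>S. (V i r / d r * d r' * V j r') * (if r = r' then 1 else 0))"
    using U2 by (intro sum.cong refl) auto
  also have "\<dots> = (\<Sum>r\<in>S. V i r * V j r)"
    using fin d by (intro sum.cong refl) (simp add: if_distrib sum.delta cong: if_cong)
  also have "\<dots> = (if i = j then 1 else 0)" using V1 ij by auto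
  finally show "mmul_on S (\<lambda>i j. \<Sum>r\<in>S. V i r / d r * U j r) (\<lambda>i j. \<Sum>r\<in>S. U i r * d r * V j r) i j = (if i = j then 1 else 0)" .
qed

lemma sum_upper:
  fixes f :: "nat \<Rightarrow> real"
  assumes "i \<in> {a..<b}"
  shows "(\<Sum>j\<in>{a..<b}. (if i < j then 1 else 0) * f j) = sum f {Suc i..<b}"
proof -
  have "(\<Sum>j\<in>{a..<b}. (if i < j then 1 else 0) * f j) = (\<Sum>j\<in>{a..<b}. if j \<in> {Suc i..<b} then f j else 0)"
    by (intro sum.cong) auto
  also have "\<dots> = sum f ({a..<b} \<inter> {Suc i..<b})" by (rule sum.inter_restrict[symmetric]) simp
  also have "{a..<b} \<inter> {Suc i..<b} = {Suc i..<b}" using assms by auto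
  finally show ?thesis .
qed

lemma sum_lower:
  fixes f :: "nat \<Rightarrow> real"
  assumes "j \<in> {a..<b}"
  shows "(\<Sum>i\<in>{a..<b}. (if i < j then 1 else 0) * f i) = sum f {a..<j}"
proof -
  have "(\<Sum>i\<in>{a..<b}. (if i < j then 1 else 0) * f i) = (\<Sum>i\<in>{a..<b}. if i \<in> {a..<j} then f i else 0)"
    by (intro sum.cong) auto
  also have "\<dots> = sum f ({a..<b} \<inter> {a..<j})" by (rule sum.inter_restrict[symmetric]) simp
  also have "{a..<b} \<inter> {a..<j} = {a..<j}" using assms by auto
  finally show ?thesis .
qed

lemma block_inv:
  fixes M U Sg V :: "nat \<Rightarrow> nat \<Rightarrow> real" and \<tau> :: real
  assumes ab: "a + 2 \<le> b" and S: "S = {a..<b}"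
  and M: "\<forall>i\<in>S. \<forall>j\<in>S. M i j = (if i < j then 1 else 0)"
  and svd: "svd_on S M U Sg V" and t0: "0 < \<tau>" and t1: "\<tau> \<le> 1/2"
  shows "\<exists>s. (s = 1 \<or> s = -1) \<and> (\<forall>p\<in>S. (\<Sum>q\<in>S. inv_on S (beam_D S \<tau> U Sg V) p q)
            = (if p = a then s / \<tau> else 0) + (if p = b - 1 then 1 else 0))"
proof -
  have fin: "finite S" using S by simp
  have aS: "a \<in> S" and bS: "b - 1 \<in> S" and ab': "a \<noteq> b - 1" using ab S by auto
  have oU: "orthogonal_on S U" and oV: "orthogonal_on S V" using svd by (auto simp: svd_on_def)
  have Sg0: "\<And>p q. p \<in> S \<Longrightarrow> q \<in> S \<Longrightarrow> p \<noteq> q \<Longrightarrow> Sg p q = 0"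
    and Sgp: "\<And>p. p \<in> S \<Longrightarrow> Sg p p \<ge> 0" using svd by (auto simp: svd_on_def)
  have U2: "\<forall>i\<in>S. \<forall>j\<in>S. (\<Sum>l\<in>S. U l i * U l j) = (if i = j then 1 else 0)"
    using oU by (simp add: orthogonal_on_def)
  have V2: "\<forall>i\<in>S. \<forall>j\<in>S. (\<Sum>l\<in>S. V l i * V l j) = (if i = j then 1 else 0)"
    using oV by (simp add: orthogonal_on_def)
  have U1: "\<forall>i\<in>S. \<forall>j\<in>S. (\<Sum>l\<in>S. U i l * U j l) = (if i = j then 1 else 0)"
    using orth_rows[of a b U] oU S by auto
  have V1: "\<forall>i\<in>S. \<forall>j\<in>S. (\<Sum>l\<in>S. V i l * V j l) = (if i = j then 1 else 0)"
    using orth_rows[of a b V] oV S by auto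
  have R1: "sum (\<lambda>j. V j p) {Suc i..<b} = Sg p p * U i p" if "p \<in> S" "i \<in> S" for p i
  proof -
    have "(\<Sum>j\<in>S. M i j * V j p) = U i p * Sg p p" by (rule svd_rel1[OF svd fin that(2,1)])
    moreover have "(\<Sum>j\<in>S. M i j * V j p) = (\<Sum>j\<in>{a..<b}. (if i < j then 1 else 0) * V j p)"
      using M that S by (intro sum.cong) auto
    ultimately show ?thesis using sum_upper[of i a b "\<lambda>j. V j p"] that S by (simp add: mult.commute)
  qed
  have R2: "sum (\<lambda>i. U i p) {a..<j} = Sg p p * V j p" if "p \<in> S" "j \<in> S" for p j
  proof -
    have "(\<Sum>i\<in>S. M i j * U i p) = V j p * Sg p p" by (rule svd_rel2[OF svd fin that(2,1)])
    moreover have "(\<Sum>i\<in>S. M i j * U i p) = (\<Sum>i\<in>{a..<b}. (if i < j then 1 else 0) * U i p)"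
      using M that S by (intro sum.cong) auto
    ultimately show ?thesis using sum_lower[of j a b "\<lambda>i. U i p"] that S by (simp add: mult.commute)
  qed
  have nV: "(\<Sum>j\<in>{a..<b}. (V j p)^2) = 1" if "p \<in> S" for p
    using V2 that S by (simp add: power2_eq_square)
  have nU: "(\<Sum>j\<in>{a..<b}. (U j p)^2) = 1" if "p \<in> S" for p
    using U2 that S by (simp add: power2_eq_square)
  have small: "Sg p p = 0" if "p \<in> S" "Sg p p < 1/2" for p
    using sv_zero[OF ab, of "\<lambda>j. V j p" "Sg p p" "\<lambda>i. U i p"] R1 R2 nV nU Sgp that S by auto
  have kerV: "V j p = 0" if "p \<in> S" "Sg p p = 0" "j \<in> S" "j \<noteq> a" for p j
    using sv_kernel_v[of a b "\<lambda>j. V j p" j] R1 that S by auto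
  have kerU: "U i p = 0" if "p \<in> S" "Sg p p = 0" "i \<in> S" "i \<noteq> b - 1" for p i
    using sv_kernel_u[of a b "\<lambda>i. U i p" i] R2 that S by auto
  have Va: "(V a p)^2 = 1" if "p \<in> S" "Sg p p = 0" for p
  proof -
    have "(\<Sum>j\<in>S. (V j p)^2) = (V a p)^2"
      using kerV[OF that] by (intro sum_single[OF fin aS]) auto
    thus ?thesis using nV that S by simp
  qed
  have Ub: "(U (b-1) p)^2 = 1" if "p \<in> S" "Sg p p = 0" for p
  proof -
    have "(\<Sum>j\<in>S. (U j p)^2) = (U (b-1) p)^2"
      using kerU[OF that] by (intro sum_single[OF fin bS]) auto
    thus ?thesis using nU that S by simp
  qed
  have Vapos: "V a p = 0" if "p \<in> S" "Sg p p \<noteq> 0" for p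
    using R2[OF that(1) aS] that by simp
  obtain p0 where p0: "p0 \<in> S" "Sg p0 p0 = 0"
  proof -
    have "\<exists>p\<in>S. Sg p p = 0"
    proof (rule ccontr)
      assume "\<not> ?thesis"
      hence "(\<Sum>l\<in>S. V a l * V a l) = 0" using Vapos by (intro sum.neutral) auto
      thus False using V1 aS by auto
    qed
    thus ?thesis using that by blast
  qed
  have uniq: "p = p0" if "p \<in> S" "Sg p p = 0" for p
  proof (rule ccontr)
    assume ne: "p \<noteq> p0"
    have "(\<Sum>l\<in>S. V l p * V l p0) = V a p * V a p0"
      using kerV[OF that] by (intro sum_single[OF fin aS]) auto
    moreover have "(\<Sum>l\<in>S. V l p * V l p0) = 0" using V2 that p0 ne by auto
    ultimately have "V a p * V a p0 = 0" by simp
    hence "(V a p * V a p0)^2 = 0" by simp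
    moreover have "(V a p * V a p0)^2 = 1" using Va[OF that] Va[OF p0] by (simp add: power_mult_distrib)
    ultimately show False by simp
  qed
  define sm where "sm p = sigma_mod \<tau> Sg p p" for p
  have sm_eq: "sm p = Sg p p + (if p = p0 then \<tau> else 0)" if "p \<in> S" for p
  proof (cases "p = p0")
    case True thus ?thesis using p0 t0 by (simp add: sm_def sigma_mod_def)
  next
    case False
    have "\<not> Sg p p < \<tau>"
    proof
      assume "Sg p p < \<tau>"
      hence "Sg p p = 0" using small[OF that] t1 by simp
      thus False using uniq[OF that] False by simp
    qed
    thus ?thesis using False by (auto simp: sm_def sigma_mod_def)
  qed
  have sm_pos: "sm p \<noteq> 0" if "p \<in> S" for p
  proof (cases "p = p0")
    case True thus ?thesis using sm_eq[OF that] p0 t0 by simp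
  next
    case False
    hence "Sg p p \<noteq> 0" using uniq[OF that] by blast
    thus ?thesis using sm_eq[OF that] False by simp
  qed
  define D where "D = beam_D S \<tau> U Sg V"
  have Dsum: "D i j = (\<Sum>r\<in>S. U i r * sm r * V j r)" if "i \<in> S" "j \<in> S" for i j
    unfolding D_def beam_D_def
  proof (rule sum.cong[OF refl])
    fix p assume p: "p \<in> S"
    show "(\<Sum>q\<in>S. U i p * sigma_mod \<tau> Sg p q * V j q) = U i p * sm p * V j p"
      unfolding sm_def
      by (rule sum_single[OF fin p]) (use p Sg0 in \<open>auto simp: sigma_mod_def\<close>)
  qed
  have Dfun: "\<And>i j. D i j = (if i \<in> S \<and> j \<in> S then (\<Sum>r\<in>S. U i r * sm r * V j r) else D i j)"
    using Dsum by auto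
  define s where "s = U (b-1) p0 * V a p0"
  have s2: "s^2 = 1" using Ub[OF p0] Va[OF p0] by (simp add: s_def power_mult_distrib)
  hence spm: "s = 1 \<or> s = -1" by (simp add: power2_eq_1_iff)
  have UV: "U i p0 * V j p0 = (if i = b-1 \<and> j = a then s else 0)" if "i \<in> S" "j \<in> S" for i j
    using kerU[OF p0 that(1)] kerV[OF p0 that(2)] by (auto simp: s_def)
  have DE: "D i j = (if i < j then 1 else 0) + (if i = b-1 \<and> j = a then \<tau> * s else 0)"
    if "i \<in> S" "j \<in> S" for i j
  proof -
    have "D i j = (\<Sum>r\<in>S. U i r * Sg r r * V j r + (if r = p0 then \<tau> * (U i r * V j r) else 0))"
      unfolding Dsum[OF that] using sm_eq by (intro sum.cong) (auto simp: algebra_simps)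
    also have "\<dots> = M i j + \<tau> * (U i p0 * V j p0)"
      using svd_single[OF svd fin that] fin p0 by (simp add: sum.distrib)
    finally show ?thesis using M that UV[OF that] by simp
  qed
  have isinv: "is_inverse_on S D (\<lambda>i j. \<Sum>r\<in>S. V i r / sm r * U j r)"
  proof -
    have "is_inverse_on S (\<lambda>i j. \<Sum>r\<in>S. U i r * sm r * V j r) (\<lambda>i j. \<Sum>r\<in>S. V i r / sm r * U j r)"
      by (rule inv_from_orth[OF fin U1 V1 U2 V2]) (use sm_pos in auto)
    moreover have "mmul_on S D N i j = mmul_on S (\<lambda>i j. \<Sum>r\<in>S. U i r * sm r * V j r) N i j"
      "mmul_on S N D i j = mmul_on S N (\<lambda>i j. \<Sum>r\<in>S. U i r * sm r * V j r) i j"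
      if "i \<in> S" "j \<in> S" for N i j
      unfolding mmul_on_def using that Dsum by (auto intro!: sum.cong)
    ultimately show ?thesis unfolding is_inverse_on_def by simp
  qed
  define Di where "Di = inv_on S D"
  have Di: "is_inverse_on S D Di" unfolding Di_def inv_on_def by (rule someI[of "is_inverse_on S D", OF isinv])
  define y where "y r = (if r = a then s / \<tau> else 0) + (if r = b - 1 then 1 else 0)" for r
  have Dy: "(\<Sum>r\<in>S. D q r * y r) = 1" if q: "q \<in> S" for q
  proof -
    have "(\<Sum>r\<in>S. D q r * y r) = (\<Sum>r\<in>S. (if r = a then D q a * (s / \<tau>) else 0) + (if r = b - 1 then D q (b-1) else 0))"
      using ab' by (intro sum.cong) (auto simp: y_def)
    also have "\<dots> = D q a * (s / \<tau>) + D q (b-1)" using fin aS bS by (simp add: sum.distrib)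
    also have "\<dots> = 1"
    proof (cases "q = b - 1")
      case True
      moreover have "\<not> b - 1 < a" using ab by simp
      ultimately show ?thesis using DE[OF q aS] DE[OF q bS] ab' t0 s2 aS S
        by (simp add: power2_eq_square)
    next
      case False
      hence "q < b - 1" using q S by auto
      thus ?thesis using DE[OF q aS] DE[OF q bS] False q S by auto
    qed
    finally show ?thesis .
  qed
  have "(\<Sum>q\<in>S. Di p q) = y p" if p: "p \<in> S" for p
  proof -
    have "(\<Sum>q\<in>S. Di p q) = (\<Sum>q\<in>S. Di p q * (\<Sum>r\<in>S. D q r * y r))" using Dy by simp
    also have "\<dots> = (\<Sum>q\<in>S. \<Sum>r\<in>S. Di p q * D q r * y r)"
      by (simp add: sum_distrib_left mult.assoc)
    also have "\<dots> = (\<Sum>r\<in>S. \<Sum>q\<in>S. Di p q * D q r * y r)" by (rule sum.swap)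
    also have "\<dots> = (\<Sum>r\<in>S. mmul_on S Di D p r * y r)"
      unfolding mmul_on_def by (simp add: sum_distrib_right)
    also have "\<dots> = (\<Sum>r\<in>S. (if p = r then 1 else 0) * y r)"
      using Di p unfolding is_inverse_on_def by (intro sum.cong) auto
    also have "\<dots> = y p" using sum_single[OF fin p, of "\<lambda>r. (if p = r then 1 else 0) * y r"] by simp
    finally show ?thesis .
  qed
  thus ?thesis using spm unfolding Di_def D_def y_def by blast
qed

lemma maxnorm_eq:
  fixes M :: "nat \<Rightarrow> nat \<Rightarrow> real"
  assumes "finite R" "\<forall>i\<in>R. \<forall>j\<in>R. \<bar>M i j\<bar> \<le> v" "i0 \<in> R" "j0 \<in> R" "\<bar>M i0 j0\<bar> = v"
  shows "maxnorm_on R M = v"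
proof -
  have eq: "{\<bar>M i j\<bar> | i j. i \<in> R \<and> j \<in> R} = (\<lambda>(i,j). \<bar>M i j\<bar>) ` (R \<times> R)" by auto
  show ?thesis unfolding maxnorm_on_def eq
  proof (rule Max_eqI)
    show "finite ((\<lambda>(i,j). \<bar>M i j\<bar>) ` (R \<times> R))" using assms(1) by simp
    show "y \<le> v" if "y \<in> (\<lambda>(i,j). \<bar>M i j\<bar>) ` (R \<times> R)" for y using that assms(2) by auto
    show "v \<in> (\<lambda>(i,j). \<bar>M i j\<bar>) ` (R \<times> R)" using assms(3-5) by force
  qed
qed

lemma zielke_abs: "\<bar>zielke n i j\<bar> \<le> 1"
  by (simp add: zielke_def)

lemma powr_ge1:
  fixes \<tau> :: real
  assumes "0 < \<tau>" "\<tau> \<le> 1/2" "1 \<le> k"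
  shows "1 \<le> \<tau> powr (1 - real k)"
proof -
  have "\<tau> powr 0 \<le> \<tau> powr (1 - real k)" using assms by (intro powr_mono') auto
  thus ?thesis using assms by simp
qed

lemma powr_step:
  fixes \<tau> :: real
  assumes "0 < \<tau>"
  shows "\<tau> powr (1 - real (Suc k)) = \<tau> powr (1 - real k) / \<tau>"
proof -
  have "\<tau> powr (1 - real (Suc k)) = \<tau> powr ((1 - real k) - 1)" by simp
  also have "\<dots> = \<tau> powr (1 - real k) / \<tau> powr 1" by (rule powr_diff)
  finally show ?thesis using assms by simp
qed

theorem theorem3p3:
  fixes n :: nat and I :: "nat list" and tau :: real
    and A U Sg V :: "nat \<Rightarrow> nat \<Rightarrow> nat \<Rightarrow> real"
  assumes "n \<ge> 2"
    and "length I \<ge> 2"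
    and "sorted_wrt (<) I"
    and "hd I = 1" and "last I = n + 1"
    and "\<forall>k\<in>{1..length I - 1}. I ! k - I ! (k - 1) \<ge> 2"
    and "0 < tau" and "tau \<le> 1 / 2"
    and "beam_run n I tau A U Sg V"
  shows "Max {maxnorm_on {I ! (k - 1)..n} (A k) / maxnorm_on {1..n} (zielke n) | k. k \<in> {1..length I - 1}}
           = tau powr (1 - real (length I - 1))"
proof -
  define nt where "nt = length I - 1"
  have nt1: "nt \<ge> 1" and len: "length I = Suc nt" using assms(2) by (auto simp: nt_def)
  have Ine: "I \<noteq> []" using assms(2) by auto
  have I0: "I ! 0 = 1" using assms(4) Ine by (simp add: hd_conv_nth)
  have Int: "I ! nt = n + 1" using assms(5) Ine by (simp add: last_conv_nth nt_def)
  have lt: "I ! i < I ! j" if "i < j" "j \<le> nt" for i j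
    using sorted_wrt_nth_less[OF assms(3)] that len by auto
  have gap: "I ! (k - 1) + 2 \<le> I ! k" if "1 \<le> k" "k \<le> nt" for k
  proof -
    have "2 \<le> I ! k - I ! (k - 1)" using assms(6) that by (simp add: nt_def)
    thus ?thesis by linarith
  qed
  have le_n: "I ! k \<le> n" if "k < nt" for k using lt[OF that order_refl] Int by simp
  have ge1: "1 \<le> I ! k" if "k \<le> nt" for k
    using lt[of 0 k] that I0 by (cases "k = 0") auto
  have A1: "\<forall>i\<in>{1..n}. \<forall>j\<in>{1..n}. A 1 i j = zielke n i j"
    and svdk: "\<forall>k\<in>{1..nt}. svd_on (blk I k) (A k) (U k) (Sg k) (V k)"
    and schur: "\<forall>k\<in>{1..<nt}. \<forall>i\<in>{I ! k..n}. \<forall>j\<in>{I ! k..n}.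
        A (Suc k) i j = A k i j -
          (\<Sum>p\<in>blk I k. \<Sum>q\<in>blk I k.
             A k i p * inv_on (blk I k) (beam_D (blk I k) tau (U k) (Sg k) (V k)) p q * A k q j)"
    using assms(9) unfolding beam_run_def nt_def by auto
  have inv: "\<exists>c. \<bar>c\<bar> = tau powr (1 - real k) \<and> (\<forall>i\<in>{I!(k-1)..n}. \<forall>j\<in>{I!(k-1)..n}.
               A k i j = (if i = n \<and> 2 \<le> k then c else zielke n i j))"
    if "1 \<le> k" "k \<le> nt" for k
    using that
  proof (induction k)
    case 0 thus ?case by simp
  next
    case (Suc k)
    show ?case
    proof (cases "k = 0")
      case True
      thus ?thesis using A1 I0 assms(7) by (intro exI[of _ 1]) auto
    next
      case False
      hence k1: "1 \<le> k" "k < nt" using Suc.prems by auto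
      obtain c where c: "\<bar>c\<bar> = tau powr (1 - real k)"
        and cA: "\<forall>i\<in>{I!(k-1)..n}. \<forall>j\<in>{I!(k-1)..n}. A k i j = (if i = n \<and> 2 \<le> k then c else zielke n i j)"
        using Suc.IH k1 by auto
      define a where "a = I ! (k - 1)"
      define b where "b = I ! k"
      have ab: "a + 2 \<le> b" using gap[of k] k1 by (simp add: a_def b_def)
      have bn: "b \<le> n" using le_n[OF k1(2)] by (simp add: b_def)
      have a1: "1 \<le> a" using ge1[of "k - 1"] k1 by (simp add: a_def)
      have blkS: "blk I k = {a..<b}" by (simp add: blk_def a_def b_def)
      have cA': "A k i j = (if i = n \<and> 2 \<le> k then c else zielke n i j)" if "a \<le> i" "i \<le> n" "a \<le> j" "j \<le> n" for i j
        using cA that by (simp add: a_def)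
      have Mb: "\<forall>i\<in>blk I k. \<forall>j\<in>blk I k. A k i j = (if i < j then 1 else 0)"
      proof (intro ballI)
        fix i j assume ij: "i \<in> blk I k" "j \<in> blk I k"
        hence "a \<le> i" "i < b" "a \<le> j" "j < b" by (auto simp: blkS)
        thus "A k i j = (if i < j then 1 else 0)"
          using cA'[of i j] bn a1 by (auto simp: zielke_def)
      qed
      have svd: "svd_on (blk I k) (A k) (U k) (Sg k) (V k)" using svdk k1 by auto
      define Di where "Di = inv_on (blk I k) (beam_D (blk I k) tau (U k) (Sg k) (V k))"
      have ex: "\<exists>s. (s = 1 \<or> s = -1) \<and> (\<forall>p\<in>blk I k. (\<Sum>q\<in>blk I k. Di p q) = (if p = a then s / tau else 0) + (if p = b - 1 then 1 else 0))"
        unfolding Di_def by (rule block_inv[OF ab blkS Mb svd assms(7,8)])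
      then obtain s where s: "s = 1 \<or> s = -1"
        and ys: "\<forall>p\<in>blk I k. (\<Sum>q\<in>blk I k. Di p q) = (if p = a then s / tau else 0) + (if p = b - 1 then 1 else 0)"
        by (elim exE conjE)
      have ab': "a \<noteq> b - 1" using ab by simp
      have red: "(\<Sum>p\<in>blk I k. \<Sum>q\<in>blk I k. A k i p * Di p q * A k q j) = A k i a * (s / tau) + A k i (b - 1)"
        if j: "b \<le> j" "j \<le> n" for i j
      proof -
        have "(\<Sum>p\<in>blk I k. \<Sum>q\<in>blk I k. A k i p * Di p q * A k q j) = (\<Sum>p\<in>blk I k. A k i p * (\<Sum>q\<in>blk I k. Di p q))"
        proof (rule sum.cong[OF refl])
          fix p assume p: "p \<in> blk I k"
          have "(\<Sum>q\<in>blk I k. A k i p * Di p q * A k q j) = (\<Sum>q\<in>blk I k. A k i p * Di p q)"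
          proof (rule sum.cong[OF refl])
            fix q assume q: "q \<in> blk I k"
            hence "a \<le> q" "q < b" by (auto simp: blkS)
            hence "A k q j = 1" using cA'[of q j] j bn a1 ab by (auto simp: zielke_def)
            thus "A k i p * Di p q * A k q j = A k i p * Di p q" by simp
          qed
          thus "(\<Sum>q\<in>blk I k. A k i p * Di p q * A k q j) = A k i p * (\<Sum>q\<in>blk I k. Di p q)"
            by (simp add: sum_distrib_left)
        qed
        also have "\<dots> = (\<Sum>p\<in>blk I k. (if p = a then A k i a * (s / tau) else 0) + (if p = b - 1 then A k i (b - 1) else 0))"
          using ys ab' by (intro sum.cong refl) auto
        also have "\<dots> = A k i a * (s / tau) + A k i (b - 1)"
          using ab by (simp add: sum.distrib blkS)
        finally show ?thesis .
      qed
      define c' where "c' = (if k = 1 then s / tau else - c * s / tau)"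
      have c'abs: "\<bar>c'\<bar> = tau powr (1 - real (Suc k))"
      proof (cases "k = 1")
        case True
        hence "\<bar>c'\<bar> = 1 / tau" using s assms(7) by (auto simp: c'_def)
        moreover have "tau powr (1 - real (Suc k)) = 1 / tau" using True powr_step[OF assms(7), of 1] by simp
        ultimately show ?thesis by simp
      next
        case False
        hence "\<bar>c'\<bar> = \<bar>c\<bar> / tau" using s assms(7) by (auto simp: c'_def abs_mult)
        thus ?thesis using c powr_step[OF assms(7), of k] by simp
      qed
      show ?thesis
      proof (intro exI[of _ c'] conjI c'abs ballI)
        fix i j assume ij: "i \<in> {I ! (Suc k - 1)..n}" "j \<in> {I ! (Suc k - 1)..n}"
        hence ij': "b \<le> i" "i \<le> n" "b \<le> j" "j \<le> n" by (auto simp: b_def)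
        have S: "A (Suc k) i j = A k i j - (A k i a * (s / tau) + A k i (b - 1))"
          using schur k1 ij' red[OF ij'(3,4), of i] unfolding Di_def b_def by auto
        show "A (Suc k) i j = (if i = n \<and> 2 \<le> Suc k then c' else zielke n i j)"
        proof (cases "i = n")
          case False
          have le: "a \<le> i" "a \<le> b - 1" "b - 1 \<le> n" "a \<le> j" "a \<le> n" using ij' ab bn by auto
          have z: "zielke n i a = 0" "zielke n i (b - 1) = 0"
            using ij' ab False unfolding zielke_def by auto
          have "A k i a = 0" using cA'[of i a] le ij' False z by simp
          moreover have "A k i (b - 1) = 0" using cA'[of i "b - 1"] le ij' False z by simp
          moreover have "A k i j = zielke n i j" using cA'[of i j] le ij' False by simp
          ultimately have "A k i a * (s / tau) + A k i (b - 1) = 0" "A k i j = zielke n i j" by auto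
          hence "A (Suc k) i j = zielke n i j" unfolding S by linarith
          thus ?thesis using False by simp
        next
          case True
          show ?thesis
          proof (cases "k = 1")
            case k: True
            hence "a = 1" using I0 by (simp add: a_def)
            have le: "a \<le> i" "a \<le> b - 1" "b - 1 \<le> n" "a \<le> j" "a \<le> n" using ij' ab bn by auto
            have z: "zielke n n 1 = -1" "zielke n n (b - 1) = 0" "zielke n n j = 0"
              using ij' ab \<open>a = 1\<close> assms(1) unfolding zielke_def by auto
            have "A k i a = -1" using cA'[of i a] le ij' True k z \<open>a = 1\<close> by simp
            moreover have "A k i (b - 1) = 0" using cA'[of i "b - 1"] le ij' True k z by simp
            moreover have "A k i j = 0" using cA'[of i j] le ij' True k z by simp
            ultimately have "A k i a * (s / tau) + A k i (b - 1) = - (s / tau)" "A k i j = 0" by auto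
            hence "A (Suc k) i j = s / tau" unfolding S by linarith
            thus ?thesis using True k by (simp add: c'_def)
          next
            case k: False
            have le: "a \<le> i" "a \<le> b - 1" "b - 1 \<le> n" "a \<le> j" "a \<le> n" using ij' ab bn by auto
            have k2: "2 \<le> k" using k k1 by simp
            have "A k i a = c" using cA'[of i a] le ij' True k2 by simp
            moreover have "A k i (b - 1) = c" using cA'[of i "b - 1"] le ij' True k2 by simp
            moreover have "A k i j = c" using cA'[of i j] le ij' True k2 by simp
            ultimately have "A (Suc k) i j = c - (c * (s / tau) + c)" unfolding S by simp
            hence "A (Suc k) i j = - c * s / tau" by simp
            thus ?thesis using True k k2 by (simp add: c'_def)
          qed
        qed
      qed
    qed
  qed
  have mz: "maxnorm_on {1..n} (zielke n) = 1"
    by (rule maxnorm_eq[of _ _ _ 1 2]) (use assms(1) zielke_abs in \<open>auto simp: zielke_def\<close>)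
  have mk: "maxnorm_on {I!(k-1)..n} (A k) = tau powr (1 - real k)" if k: "1 \<le> k" "k \<le> nt" for k
  proof -
    obtain c where c: "\<bar>c\<bar> = tau powr (1 - real k)"
      and cA: "\<forall>i\<in>{I!(k-1)..n}. \<forall>j\<in>{I!(k-1)..n}. A k i j = (if i = n \<and> 2 \<le> k then c else zielke n i j)"
      using inv[OF k] by auto
    have v1: "1 \<le> tau powr (1 - real k)" using powr_ge1[OF assms(7,8) k(1)] .
    have "I!k \<le> n + 1" using lt[of k nt] Int k by (cases "k = nt") auto
    hence Ilo: "I!(k-1) < n" using gap[OF k] by linarith
    have bnd: "\<forall>i\<in>{I!(k-1)..n}. \<forall>j\<in>{I!(k-1)..n}. \<bar>A k i j\<bar> \<le> tau powr (1 - real k)"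
    proof (intro ballI)
      fix i j assume ij: "i \<in> {I!(k-1)..n}" "j \<in> {I!(k-1)..n}"
      hence e: "A k i j = (if i = n \<and> 2 \<le> k then c else zielke n i j)" using cA by blast
      have "\<bar>zielke n i j\<bar> \<le> tau powr (1 - real k)" using zielke_abs[of n i j] v1 by linarith
      thus "\<bar>A k i j\<bar> \<le> tau powr (1 - real k)" unfolding e using c by simp
    qed
    show ?thesis
    proof (cases "k = 1")
      case True
      have "\<bar>A k 1 2\<bar> = tau powr (1 - real k)"
        using cA True I0 assms(1,7) by (auto simp: zielke_def)
      thus ?thesis using True I0 assms(1) bnd by (intro maxnorm_eq[of _ _ _ 1 2]) auto
    next
      case False
      have "\<bar>A k n n\<bar> = tau powr (1 - real k)" using cA c False k Ilo by auto
      thus ?thesis using Ilo bnd by (intro maxnorm_eq[of _ _ _ n n]) auto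
    qed
  qed
  have seteq: "{maxnorm_on {I ! (k - 1)..n} (A k) / maxnorm_on {1..n} (zielke n) | k. k \<in> {1..length I - 1}}
      = (\<lambda>k. tau powr (1 - real k)) ` {1..nt}"
    using mk mz unfolding nt_def[symmetric] by force
  have M: "Max ((\<lambda>k. tau powr (1 - real k)) ` {1..nt}) = tau powr (1 - real nt)"
  proof (rule Max_eqI)
    show "finite ((\<lambda>k. tau powr (1 - real k)) ` {1..nt})" by simp
    show "y \<le> tau powr (1 - real nt)" if "y \<in> (\<lambda>k. tau powr (1 - real k)) ` {1..nt}" for y
      using that assms(7,8) by (auto intro!: powr_mono')
    show "tau powr (1 - real nt) \<in> (\<lambda>k. tau powr (1 - real k)) ` {1..nt}" using nt1 by auto
  qed
  show ?thesis unfolding seteq using M by (simp only: nt_def)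
qed

end
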